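(* Fix a round $t$, a level $m\ge1$ and an anchor task $a_t$, and suppose $w_t\le c_g\epsilon^U_{m-1}$. Under the assumptions in the context, a single generator call $\iota\sim\mathsf{Gen}(a_t,m,1)$ satisfies $$\Pr\big(\iota\in\mathcal I^\star_m(a_t)\,\big|\,w_t\le c_g\epsilon^U_{m-1}\big)\ge\delta_+(m,k),$$ where $$\delta_+(m,k):=\rho_m(\epsilon^U_m)\big[1-\eta_m(k)\big]_+-\rho_m(\epsilon^U_m)\,\varepsilon_{\mathrm{ICL}}(m,k),\qquad \eta_m(k):=\frac{1-\alpha^{(m)}_{i^\star_m}}{\alpha^{(m)}_{i^\star_m}}e^{-D^{(m)}_{\min}k/2}+(T_m-1)e^{-C^{(m)}k},$$ and $[x]_+:=\max\{x,0\}$.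
   Context: Tasks have long-run values $U^{(i)}\in[0,1]$, $U^\star:=\sup_iU^{(i)}$; $\epsilon^U_m:=\epsilon^U_02^{-m}$; $\mathcal I^\star_m(a_t):=\{i:U^\star-U^{(i)}\le\epsilon^U_m\}$ is the set of $\epsilon^U_m$-successful refinements; $w_t$ is the (uncertainty) width of anchor $a_t$ at round $t$ and $c_g>0$ a constant. Refinement model: conditioned on $w_t\le c_g\epsilon^U_{m-1}$, there is a latent refinement type $I^{(m)}\in\{1,\dots,T_m\}$ with prior weights $\alpha^{(m)}_i>0$, $\sum_i\alpha^{(m)}_i=1$. The prompt contains $k$ in-context examples $\mathcal D^{(m)}_{t,k}=\{s_1,\dots,s_k\}$, and under type $i$ they have predictive distributions $p^{(m)}_i(s_r\mid\mathcal D^{(m)}_{t,r-1})$. There is a distinguished true type $i^\star_m=i^\star_m(a_t)$ under which the data are generated. Identifiability: for each $j\ne i^\star_m$ let $Z_{j,r}:=\log\frac{p^{(m)}_j(s_r\mid\mathcal D^{(m)}_{t,r-1})}{p^{(m)}_{i^\star_m}(s_r\mid\mathcal D^{(m)}_{t,r-1})}$; there are constants $D_j>0$, $\nu_j$, $b_j>0$ such that under the true type, for all $r$, $\mathbb E[Z_{j,r}\mid\mathcal G_{r-1}]\le-D_j$ and $\mathbb E[\exp(\lambda(Z_{j,r}+D_j))\mid\mathcal G_{r-1}]\le\exp(\lambda^2\nu_j^2/2)$ for all $|\lambda|\le1/b_j$ ($\mathcal G_r$ the natural filtration); $D^{(m)}_{\min}:=\min_{j\ne i^\star_m}D_j$,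 $C^{(m)}:=\min_{j\ne i^\star_m}\frac{D_j^2}{8(\nu_j^2+b_jD_j/2)}$. The generator first samples a type $\widehat I\sim q_{m,k}(\cdot\mid a_t,\mathcal D^{(m)}_{t,k})$ and then a proposal $\iota$; given the true type the proposal succeeds with probability at least $1-\beta_m$: $\Pr(\iota\in\mathcal I^\star_m(a_t)\mid\widehat I=i^\star_m,a_t,m,\mathcal D^{(m)}_{t,k})\ge1-\beta_m$, $\beta_m\in[0,1)$; write $\rho_m(\epsilon^U_m):=1-\beta_m$. Let $\pi^{(m)}(\cdot\mid a_t,\mathcal D^{(m)}_{t,k})$ be the Bayes posterior over types; assume $\mathrm{TV}(q_{m,k}(\cdot\mid a_t,\mathcal D^{(m)}_{t,k}),\pi^{(m)}(\cdot\mid a_t,\mathcal D^{(m)}_{t,k}))\le\varepsilon_{\mathrm{ICL}}(m,k)$. *)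

theory Defs
  imports "HOL-Probability.Probability"
begin

text \<open>Prefix of the in-context data: the first r-1 examples s_1..s_{r-1}, i.e. D_{t,r-1}.\<close>
definition hist :: "(nat \<Rightarrow> 'w \<Rightarrow> 'x) \<Rightarrow> nat \<Rightarrow> 'w \<Rightarrow> 'x list" where
  "hist s r \<omega> = map (\<lambda>i. s i \<omega>) [1..<r]"

definition data :: "(nat \<Rightarrow> 'w \<Rightarrow> 'x) \<Rightarrow> nat \<Rightarrow> 'w \<Rightarrow> 'x list" where
  "data s k \<omega> = map (\<lambda>i. s i \<omega>) [1..<Suc k]"

definition nat_filt :: "'w measure \<Rightarrow> 'x measure \<Rightarrow> (nat \<Rightarrow> 'w \<Rightarrow> 'x) \<Rightarrow> nat \<Rightarrow> 'w measure" where
  "nat_filt M X s r =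
     sigma (space M) (\<Union>i\<in>{1..r}. {s i -` A \<inter> space M | A. A \<in> sets X})"

definition lik :: "(nat \<Rightarrow> 'x list \<Rightarrow> 'x \<Rightarrow> real) \<Rightarrow> nat \<Rightarrow> 'x list \<Rightarrow> real" where
  "lik p i d = (\<Prod>r<length d. p i (take r d) (d ! r))"

definition bayes_post :: "nat \<Rightarrow> (nat \<Rightarrow> real) \<Rightarrow> (nat \<Rightarrow> 'x list \<Rightarrow> 'x \<Rightarrow> real)
    \<Rightarrow> nat \<Rightarrow> 'x list \<Rightarrow> real" where
  "bayes_post T \<alpha> p i d = \<alpha> i * lik p i d / (\<Sum>j\<in>{1..T}. \<alpha> j * lik p j d)"

definition tv_dist :: "nat \<Rightarrow> (nat \<Rightarrow> real) \<Rightarrow> (nat \<Rightarrow> real) \<Rightarrow> real" where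
  "tv_dist T q \<pi> = (1/2) * (\<Sum>i\<in>{1..T}. \<bar>q i - \<pi> i\<bar>)"

definition llr :: "(nat \<Rightarrow> 'x list \<Rightarrow> 'x \<Rightarrow> real) \<Rightarrow> (nat \<Rightarrow> 'w \<Rightarrow> 'x) \<Rightarrow> nat \<Rightarrow> nat \<Rightarrow> nat \<Rightarrow> 'w \<Rightarrow> real" where
  "llr p s istar j r \<omega> = ln (p j (hist s r \<omega>) (s r \<omega>)) - ln (p istar (hist s r \<omega>) (s r \<omega>))"

definition succ_set :: "('c \<Rightarrow> real) \<Rightarrow> real \<Rightarrow> 'c set" where
  "succ_set U \<epsilon> = {i. (SUP j. U j) - U i \<le> \<epsilon>}"

definition pos_part :: "real \<Rightarrow> real" where
  "pos_part x = max x 0"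

definition eta :: "real \<Rightarrow> nat \<Rightarrow> real \<Rightarrow> real \<Rightarrow> nat \<Rightarrow> real" where
  "eta \<alpha>star T Dmin C k = (1 - \<alpha>star) / \<alpha>star * exp (- Dmin * real k / 2) + (real T - 1) * exp (- C * real k)"

definition delta_plus :: "real \<Rightarrow> real \<Rightarrow> real \<Rightarrow> real" where
  "delta_plus \<rho> \<eta> \<epsilon>ICL = \<rho> * pos_part (1 - \<eta>) - \<rho> * \<epsilon>ICL"

end

theory Submission
  imports Defs
begin


lemma nn_real_cond_exp:
  assumes sf: "sigma_finite_subalgebra M F" and g: "integrable M g" and gpos: "\<And>x. g x \<ge> 0"
  shows "AE x in M. nn_cond_exp M F (\<lambda>x. ennreal (g x)) x = ennreal (real_cond_exp M F g x)"
proof -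
  interpret sigma_finite_subalgebra M F by fact
  have gm[measurable]: "g \<in> borel_measurable M" using g by auto
  have e: "(\<lambda>x. ennreal (- g x)) = (\<lambda>x. 0)" using gpos by (auto simp: ennreal_neg)
  have "(\<integral>\<^sup>+ x. 1 * nn_cond_exp M F (\<lambda>x. ennreal (g x)) x \<partial>M) = (\<integral>\<^sup>+ x. 1 * ennreal (g x) \<partial>M)"
    by (rule nn_cond_exp_intg) auto
  also have "\<dots> \<noteq> \<infinity>" using integrableD(2)[OF g] by simp
  finally have "AE x in M. nn_cond_exp M F (\<lambda>x. ennreal (g x)) x \<noteq> \<infinity>"
    by (intro nn_integral_PInf_AE) auto
  moreover have "AE x in M. (\<lambda>x. 0) x = nn_cond_exp M F (\<lambda>x. 0) x"
    by (rule nn_cond_exp_F_meas) auto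
  ultimately show ?thesis
    by eventually_elim (auto simp: real_cond_exp_def ennreal_enn2real_if e)
qed

lemma mgf_iter:
  fixes N :: "'a measure" and F :: "nat \<Rightarrow> 'a measure" and Y :: "nat \<Rightarrow> 'a \<Rightarrow> real"
  assumes P: "prob_space N"
  and sub: "\<And>r. r < k \<Longrightarrow> sigma_finite_subalgebra N (F r)"
  and meas: "\<And>i r. 1 \<le> i \<Longrightarrow> i \<le> r \<Longrightarrow> r < k \<Longrightarrow> Y i \<in> borel_measurable (F r)"
  and measN: "\<And>i. 1 \<le> i \<Longrightarrow> i \<le> k \<Longrightarrow> Y i \<in> borel_measurable N"
  and int: "\<And>r. 1 \<le> r \<Longrightarrow> r \<le> k \<Longrightarrow> integrable N (\<lambda>\<omega>. exp (l * Y r \<omega>))"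
  and ce: "\<And>r. 1 \<le> r \<Longrightarrow> r \<le> k \<Longrightarrow> AE \<omega> in N. real_cond_exp N (F (r-1)) (\<lambda>\<omega>. exp (l * Y r \<omega>)) \<omega> \<le> c"
  and c: "c \<ge> 0"
  shows "n \<le> k \<Longrightarrow> (\<integral>\<^sup>+\<omega>. ennreal (exp (l * (\<Sum>i\<in>{1..n}. Y i \<omega>))) \<partial>N) \<le> ennreal (c ^ n)"
proof (induction n)
  case 0
  interpret prob_space N by fact
  show ?case by (simp add: emeasure_space_1)
next
  case (Suc n)
  interpret sigma_finite_subalgebra N "F n" using sub Suc by simp
  define f where "f = (\<lambda>\<omega>. ennreal (exp (l * (\<Sum>i\<in>{1..n}. Y i \<omega>))))"
  define g where "g = (\<lambda>\<omega>. ennreal (exp (l * Y (Suc n) \<omega>)))"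
  have fm: "f \<in> borel_measurable (F n)" unfolding f_def
    using meas Suc.prems by (intro measurable_compose[OF _ measurable_ennreal] borel_measurable_exp borel_measurable_times borel_measurable_const borel_measurable_sum) auto
  have gm: "g \<in> borel_measurable N" unfolding g_def
    using measN Suc.prems by (intro measurable_compose[OF _ measurable_ennreal] borel_measurable_exp borel_measurable_times borel_measurable_const) auto
  have "(\<integral>\<^sup>+\<omega>. ennreal (exp (l * (\<Sum>i\<in>{1..Suc n}. Y i \<omega>))) \<partial>N) = (\<integral>\<^sup>+\<omega>. f \<omega> * g \<omega> \<partial>N)"
    unfolding f_def g_def
    by (intro nn_integral_cong) (simp add: ennreal_mult[symmetric] exp_add[symmetric] distrib_left)
  also have "\<dots> = (\<integral>\<^sup>+\<omega>. f \<omega> * nn_cond_exp N (F n) g \<omega> \<partial>N)"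
    by (rule nn_cond_exp_intg[symmetric]) (use fm gm in auto)
  also have "\<dots> \<le> (\<integral>\<^sup>+\<omega>. f \<omega> * ennreal c \<partial>N)"
  proof (rule nn_integral_mono_AE)
    have "AE \<omega> in N. nn_cond_exp N (F n) g \<omega> = ennreal (real_cond_exp N (F n) (\<lambda>\<omega>. exp (l * Y (Suc n) \<omega>)) \<omega>)"
      unfolding g_def by (rule nn_real_cond_exp) (use int Suc.prems sub in auto)
    moreover have "AE \<omega> in N. real_cond_exp N (F n) (\<lambda>\<omega>. exp (l * Y (Suc n) \<omega>)) \<omega> \<le> c"
      using ce[of "Suc n"] Suc.prems by simp
    ultimately show "AE \<omega> in N. f \<omega> * nn_cond_exp N (F n) g \<omega> \<le> f \<omega> * ennreal c"
      by eventually_elim (auto intro!: mult_left_mono ennreal_leI)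
  qed
  also have "\<dots> = (\<integral>\<^sup>+\<omega>. f \<omega> \<partial>N) * ennreal c"
    by (rule nn_integral_multc) (use fm measurable_from_subalg[OF subalg] in auto)
  also have "\<dots> \<le> ennreal (c ^ n) * ennreal c"
    using Suc by (intro mult_right_mono) (auto simp: f_def)
  also have "\<dots> = ennreal (c ^ Suc n)" using c by (simp add: ennreal_mult[symmetric] mult.commute)
  finally show ?case .
qed



lemma chernoff_exponent:
  fixes D b \<nu> :: real
  assumes D: "D > 0" and b: "b > 0"
  shows "\<exists>l>0. l \<le> 1 / b \<and> l\<^sup>2 * \<nu>\<^sup>2 / 2 - l * D / 2 \<le> - (D\<^sup>2 / (8 * (\<nu>\<^sup>2 + b * D / 2)))"
proof (cases "b * D \<le> 2 * \<nu>\<^sup>2")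
  case True
  then have v: "\<nu>\<^sup>2 > 0" using D b by (smt (verit) mult_pos_pos)
  define l where "l = D / (2 * \<nu>\<^sup>2)"
  have "l > 0" using D v by (simp add: l_def)
  moreover have "l \<le> 1 / b" using True b v unfolding l_def by (simp add: field_simps)
  moreover have "l\<^sup>2 * \<nu>\<^sup>2 / 2 - l * D / 2 = - (D\<^sup>2 / (8 * \<nu>\<^sup>2))"
    unfolding l_def using v by (simp add: field_simps power2_eq_square)
  moreover have "D\<^sup>2 / (8 * (\<nu>\<^sup>2 + b * D / 2)) \<le> D\<^sup>2 / (8 * \<nu>\<^sup>2)"
    using v D b mult_pos_pos[OF D b] by (intro divide_left_mono) (auto intro!: mult_pos_pos add_pos_pos)
  ultimately show ?thesis by (intro exI[of _ l]) auto
next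
  case False
  define l where "l = 1 / b"
  have "l\<^sup>2 * \<nu>\<^sup>2 / 2 - l * D / 2 = (\<nu>\<^sup>2 - b * D) / (2 * b\<^sup>2)"
    unfolding l_def using b by (simp add: field_simps power2_eq_square)
  also have "\<dots> \<le> - (D / (4 * b))"
    using False b D by (simp add: field_simps power2_eq_square)
  also have "\<dots> \<le> - (D\<^sup>2 / (8 * (\<nu>\<^sup>2 + b * D / 2)))"
  proof -
    have "D\<^sup>2 / (8 * (\<nu>\<^sup>2 + b * D / 2)) \<le> D\<^sup>2 / (4 * b * D)"
      using D b by (intro divide_left_mono) (auto simp: zero_le_power2 intro!: mult_pos_pos add_nonneg_pos)
    also have "\<dots> = D / (4 * b)" using D by (simp add: power2_eq_square)
    finally show ?thesis by simp
  qed
  finally show ?thesis using b by (intro exI[of _ l]) (auto simp: l_def)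
qed

lemma lik_data:
  "lik p i (data s k \<omega>) = (\<Prod>r\<in>{1..k}. p i (hist s r \<omega>) (s r \<omega>))"
proof -
  have "lik p i (data s k \<omega>) = (\<Prod>r<k. p i (hist s (Suc r) \<omega>) (s (Suc r) \<omega>))"
    unfolding lik_def data_def hist_def
    by (intro prod.cong) (auto simp del: upt_Suc simp: take_map take_upt nth_map)
  also have "\<dots> = (\<Prod>r\<in>{1..k}. p i (hist s r \<omega>) (s r \<omega>))"
    by (simp add: prod.atLeast1_atMost_eq)
  finally show ?thesis .
qed

lemma lik_ratio:
  assumes "\<And>h x. p j h x > 0" "\<And>h x. p istar h x > 0"
  shows "lik p j (data s k \<omega>) / lik p istar (data s k \<omega>) = exp (\<Sum>r\<in>{1..k}. llr p s istar j r \<omega>)"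
  unfolding lik_data llr_def
  by (simp add: exp_sum exp_diff assms prod_dividef)



lemma post_lower:
  fixes \<alpha> e :: "nat \<Rightarrow> real"
  assumes fin: "finite I" and istar: "istar \<in> I" and e1: "e istar = 1"
    and apos: "\<And>i. i \<in> I \<Longrightarrow> \<alpha> i > 0" and epos: "\<And>i. i \<in> I \<Longrightarrow> e i \<ge> 0"
    and asum: "(\<Sum>i\<in>I. \<alpha> i) = 1"
    and eE: "\<And>j. j \<in> I - {istar} \<Longrightarrow> e j \<le> E" and E: "E \<ge> 0"
  shows "\<alpha> istar / (\<Sum>i\<in>I. \<alpha> i * e i) \<ge> 1 - (1 - \<alpha> istar) / \<alpha> istar * E"
proof -
  define R where "R = (\<Sum>i\<in>I - {istar}. \<alpha> i * e i)"
  have Q: "(\<Sum>i\<in>I. \<alpha> i * e i) = \<alpha> istar + R"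
    unfolding R_def using fin istar e1 by (simp add: sum.remove)
  have R0: "R \<ge> 0" unfolding R_def using apos epos by (intro sum_nonneg) (simp add: less_imp_le)
  have "R \<le> (\<Sum>i\<in>I - {istar}. \<alpha> i * E)"
    unfolding R_def using apos eE by (intro sum_mono mult_left_mono) (auto intro: less_imp_le)
  also have "\<dots> = (1 - \<alpha> istar) * E"
    using asum fin istar by (simp add: sum_distrib_right[symmetric] sum_diff1)
  finally have RE: "R \<le> (1 - \<alpha> istar) * E" .
  have a: "\<alpha> istar > 0" using apos istar by auto
  have "1 - R / \<alpha> istar \<le> \<alpha> istar / (\<alpha> istar + R)"
  proof -
    have "(1 - R / \<alpha> istar) * (\<alpha> istar + R) = \<alpha> istar - R * R / \<alpha> istar"
      using a by (simp add: field_simps power2_eq_square)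
    also have "\<dots> \<le> \<alpha> istar" using a R0 by simp
    finally show ?thesis using a R0 by (simp add: pos_le_divide_eq)
  qed
  moreover have "R / \<alpha> istar \<le> (1 - \<alpha> istar) / \<alpha> istar * E"
    using RE a by (simp add: divide_right_mono field_simps)
  ultimately show ?thesis using Q by simp
qed

lemma tv_lower:
  fixes q \<pi> :: "nat \<Rightarrow> real"
  assumes fin: "finite I" and istar: "istar \<in> I"
    and q1: "(\<Sum>i\<in>I. q i) = 1" and p1: "(\<Sum>i\<in>I. \<pi> i) = 1"
  shows "\<pi> istar - q istar \<le> (1/2) * (\<Sum>i\<in>I. \<bar>q i - \<pi> i\<bar>)"
proof -
  have e: "(\<Sum>i\<in>I - {istar}. q i - \<pi> i) = \<pi> istar - q istar"
    using fin istar q1 p1 by (simp add: sum_subtractf sum_diff1)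
  have "(\<Sum>i\<in>I - {istar}. q i - \<pi> i) \<le> (\<Sum>i\<in>I - {istar}. \<bar>q i - \<pi> i\<bar>)"
    by (intro sum_mono) auto
  then have "\<pi> istar - q istar \<le> (\<Sum>i\<in>I - {istar}. \<bar>q i - \<pi> i\<bar>)" using e by simp
  moreover have "(\<Sum>i\<in>I. \<bar>q i - \<pi> i\<bar>) = \<bar>q istar - \<pi> istar\<bar> + (\<Sum>i\<in>I - {istar}. \<bar>q i - \<pi> i\<bar>)"
    using fin istar by (simp add: sum.remove)
  ultimately show ?thesis by linarith
qed


theorem theoremC14:
  fixes M :: "'w measure" and w :: "'w \<Rightarrow> real" and cg eps0 :: real
    and m k T istar :: nat and \<alpha> D \<nu> b :: "nat \<Rightarrow> real"
    and X \<mu> :: "'x measure" and s :: "nat \<Rightarrow> 'w \<Rightarrow> 'x"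
    and p :: "nat \<Rightarrow> 'x list \<Rightarrow> 'x \<Rightarrow> real" and q :: "nat \<Rightarrow> 'x list \<Rightarrow> real"
    and Ihat :: "'w \<Rightarrow> nat" and iota :: "'w \<Rightarrow> 'c" and U :: "'c \<Rightarrow> real"
    and \<beta> \<epsilon>ICL :: real
  defines "W \<equiv> {\<omega> \<in> space M. w \<omega> \<le> cg * (eps0 / 2 ^ (m - 1))}"
    and "Mc \<equiv> uniform_measure M {\<omega> \<in> space M. w \<omega> \<le> cg * (eps0 / 2 ^ (m - 1))}"
    and "G \<equiv> nat_filt M X s"
    and "Istar \<equiv> succ_set U (eps0 / 2 ^ m)"
    and "Dmin \<equiv> Min (D ` ({1..T} - {istar}))"
    and "C \<equiv> Min ((\<lambda>j. (D j)\<^sup>2 / (8 * ((\<nu> j)\<^sup>2 + b j * D j / 2))) ` ({1..T} - {istar}))"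
  assumes M: "prob_space M"
    and w_meas: "w \<in> borel_measurable M"
    and W_pos: "measure M W > 0"
    and m: "m \<ge> 1" and cg: "cg > 0" and eps0: "eps0 > 0"
    and U: "\<And>i. 0 \<le> U i \<and> U i \<le> 1"
    \<comment> \<open>prior over refinement types\<close>
    and T: "T \<ge> 1" and istar: "istar \<in> {1..T}"
    and \<alpha>_pos: "\<And>i. i \<in> {1..T} \<Longrightarrow> \<alpha> i > 0"
    and \<alpha>_sum: "(\<Sum>i\<in>{1..T}. \<alpha> i) = 1"
    \<comment> \<open>in-context examples and predictive densities (w.r.t. reference measure mu)\<close>
    and s_meas: "\<And>r. r \<in> {1..k} \<Longrightarrow> s r \<in> measurable M X"
    and \<mu>: "sets \<mu> = sets X"
    and p_pos: "\<And>i h x. i \<in> {1..T} \<Longrightarrow> p i h x > 0"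
    and p_meas: "\<And>i h. i \<in> {1..T} \<Longrightarrow> p i h \<in> borel_measurable X"
    and p_int: "\<And>i h. i \<in> {1..T} \<Longrightarrow> integrable \<mu> (p i h)"
    and p_norm: "\<And>i h. i \<in> {1..T} \<Longrightarrow> (\<integral>x. p i h x \<partial>\<mu>) = 1"
    \<comment> \<open>data generated under the true type\<close>
    and true_gen: "\<And>r A. r \<in> {1..k} \<Longrightarrow> A \<in> sets X \<Longrightarrow>
        AE \<omega> in Mc. real_cond_exp Mc (G (r - 1)) (\<lambda>\<omega>. indicator A (s r \<omega>)) \<omega>
          = (LINT x:A|\<mu>. p istar (hist s r \<omega>) x)"
    \<comment> \<open>identifiability\<close>
    and D_pos: "\<And>j. j \<in> {1..T} - {istar} \<Longrightarrow> D j > 0"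
    and b_pos: "\<And>j. j \<in> {1..T} - {istar} \<Longrightarrow> b j > 0"
    and Z_adapted: "\<And>j r. j \<in> {1..T} - {istar} \<Longrightarrow> r \<in> {1..k} \<Longrightarrow>
        llr p s istar j r \<in> borel_measurable (G r)"
    and Z_int: "\<And>j r. j \<in> {1..T} - {istar} \<Longrightarrow> r \<in> {1..k} \<Longrightarrow>
        integrable Mc (llr p s istar j r)"
    and Z_drift: "\<And>j r. j \<in> {1..T} - {istar} \<Longrightarrow> r \<in> {1..k} \<Longrightarrow>
        AE \<omega> in Mc. real_cond_exp Mc (G (r - 1)) (llr p s istar j r) \<omega> \<le> - D j"
    and Z_mgf_int: "\<And>j r l. j \<in> {1..T} - {istar} \<Longrightarrow> r \<in> {1..k} \<Longrightarrow> \<bar>l\<bar> \<le> 1 / b j \<Longrightarrow>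
        integrable Mc (\<lambda>\<omega>. exp (l * (llr p s istar j r \<omega> + D j)))"
    and Z_mgf: "\<And>j r l. j \<in> {1..T} - {istar} \<Longrightarrow> r \<in> {1..k} \<Longrightarrow> \<bar>l\<bar> \<le> 1 / b j \<Longrightarrow>
        AE \<omega> in Mc. real_cond_exp Mc (G (r - 1)) (\<lambda>\<omega>. exp (l * (llr p s istar j r \<omega> + D j))) \<omega>
          \<le> exp (l\<^sup>2 * (\<nu> j)\<^sup>2 / 2)"
    \<comment> \<open>generator: type sampler q close to the Bayes posterior in TV\<close>
    and q_nonneg: "\<And>i \<omega>. i \<in> {1..T} \<Longrightarrow> \<omega> \<in> space M \<Longrightarrow> q i (data s k \<omega>) \<ge> 0"
    and q_meas: "\<And>i. i \<in> {1..T} \<Longrightarrow> (\<lambda>\<omega>. q i (data s k \<omega>)) \<in> borel_measurable (G k)"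
    and q_sum: "\<And>\<omega>. \<omega> \<in> space M \<Longrightarrow> (\<Sum>i\<in>{1..T}. q i (data s k \<omega>)) = 1"
    and ICL: "\<And>\<omega>. \<omega> \<in> space M \<Longrightarrow>
        tv_dist T (\<lambda>i. q i (data s k \<omega>)) (\<lambda>i. bayes_post T \<alpha> p i (data s k \<omega>)) \<le> \<epsilon>ICL"
    and Ihat_meas: "Ihat \<in> measurable M (count_space UNIV)"
    and iota_meas: "{\<omega> \<in> space M. iota \<omega> \<in> Istar} \<in> sets M"
    and Ihat_law: "\<And>i. i \<in> {1..T} \<Longrightarrow>
        AE \<omega> in Mc. real_cond_exp Mc (G k) (indicator {\<omega> \<in> space M. Ihat \<omega> = i}) \<omega>
          = q i (data s k \<omega>)"
    and \<beta>: "0 \<le> \<beta>" "\<beta> < 1"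
    and proposal: "AE \<omega> in Mc.
        real_cond_exp Mc (G k) (indicator {\<omega> \<in> space M. Ihat \<omega> = istar \<and> iota \<omega> \<in> Istar}) \<omega>
          \<ge> (1 - \<beta>) * q istar (data s k \<omega>)"
  shows "cond_prob M (\<lambda>\<omega>. iota \<omega> \<in> Istar) (\<lambda>\<omega>. w \<omega> \<le> cg * (eps0 / 2 ^ (m - 1)))
           \<ge> delta_plus (1 - \<beta>) (eta (\<alpha> istar) T Dmin C k) \<epsilon>ICL"
proof -
  interpret M: prob_space M by (rule M)
  define J where "J = {1..T} - {istar}"
  have finJ: "finite J" unfolding J_def by simp
  have Wsets: "W \<in> sets M" unfolding W_def using w_meas by measurable
  have McW: "Mc = uniform_measure M W" unfolding Mc_def W_def ..
  have WM0: "emeasure M W \<noteq> 0" using W_pos M.emeasure_eq_measure by auto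
  have WMinf: "emeasure M W \<noteq> \<infinity>" by (simp add: M.emeasure_eq_measure)
  have Mc_prob: "prob_space Mc" unfolding McW by (rule prob_space_uniform_measure[OF WM0 WMinf])
  interpret Mc: prob_space Mc by (rule Mc_prob)
  have sets_Mc[simp]: "sets Mc = sets M" and space_Mc[simp]: "space Mc = space M" unfolding McW by auto
  have Mc_sp: "measure Mc (space M) = 1" using Mc.prob_space by simp
  have bm_Mc: "borel_measurable Mc = borel_measurable M" by (rule measurable_cong_sets) auto

  define gens where "gens r = (\<Union>i\<in>{1..r}. {s i -` A \<inter> space M | A. A \<in> sets X})" for r
  have G_eq: "G r = sigma (space M) (gens r)" for r unfolding G_def nat_filt_def gens_def ..
  have gens_Pow: "gens r \<subseteq> Pow (space M)" for r unfolding gens_def by auto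
  have gens_sets: "gens r \<subseteq> sets M" if "r \<le> k" for r
    unfolding gens_def using s_meas that by (auto intro!: measurable_sets)
  have space_G: "space (G r) = space M" for r using gens_Pow by (simp add: G_eq space_measure_of)
  have sets_G: "sets (G r) = sigma_sets (space M) (gens r)" for r using gens_Pow by (simp add: G_eq sets_measure_of)
  have G_sub_M: "sets (G r) \<subseteq> sets M" if "r \<le> k" for r
    unfolding sets_G by (rule sets.sigma_sets_subset) (rule gens_sets[OF that])
  have G_mono: "sets (G r) \<subseteq> sets (G r')" if "r \<le> r'" for r r'
    unfolding sets_G gens_def using that by (intro sigma_sets_mono' UN_mono) auto
  have subalg: "subalgebra Mc (G r)" if "r \<le> k" for r
    unfolding subalgebra_def using space_G G_sub_M[OF that] by auto
  have subalgG: "subalgebra (G r') (G r)" if "r \<le> r'" for r r'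
    unfolding subalgebra_def using space_G G_mono[OF that] by auto
  have sfs: "sigma_finite_subalgebra Mc (G r)" if "r \<le> k" for r
    using subalg[OF that]
    by (intro finite_measure_subalgebra_is_sigma_finite finite_measure_subalgebra.intro
        finite_measure_subalgebra_axioms.intro) (auto simp: Mc.finite_measure_axioms)
  have fromG: "f \<in> borel_measurable M" if "r \<le> k" "f \<in> borel_measurable (G r)" for f r
    using measurable_from_subalg[OF subalg[OF that(1)] that(2)] unfolding bm_Mc .

  have llr_M: "llr p s istar j r \<in> borel_measurable M" if "j \<in> J" "r \<in> {1..k}" for j r
    using fromG[OF _ Z_adapted[OF that[unfolded J_def]]] that by auto
  define SS where "SS j \<omega> = (\<Sum>r\<in>{1..k}. llr p s istar j r \<omega>)" for j \<omega>
  have SS_star: "SS istar \<omega> = 0" for \<omega> by (simp add: SS_def llr_def)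
  have SS_M: "SS j \<in> borel_measurable M" if "j \<in> {1..T}" for j
  proof (cases "j = istar")
    case True
    then have "SS j = (\<lambda>_. 0)" using SS_star by auto
    then show ?thesis by simp
  next
    case False
    then have "j \<in> J" using that by (simp add: J_def)
    then show ?thesis unfolding SS_def[abs_def] using llr_M by (intro borel_measurable_sum) auto
  qed
  define bad where "bad j = {\<omega> \<in> space M. - (D j * real k / 2) < SS j \<omega>}" for j
  have bad_sets: "bad j \<in> sets M" if "j \<in> {1..T}" for j
  proof -
    have [measurable]: "SS j \<in> borel_measurable M" using SS_M[OF that] .
    show ?thesis unfolding bad_def by measurable
  qed

  have chern: "measure Mc (bad j) \<le> exp (- C * real k)" if j: "j \<in> J" for j
  proof -
    have jT: "j \<in> {1..T}" using j by (simp add: J_def)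
    have Dj: "D j > 0" and bj: "b j > 0" using D_pos b_pos j by (auto simp: J_def)
    obtain l where l: "l > 0" "l \<le> 1 / b j"
      "l\<^sup>2 * (\<nu> j)\<^sup>2 / 2 - l * D j / 2 \<le> - ((D j)\<^sup>2 / (8 * ((\<nu> j)\<^sup>2 + b j * D j / 2)))"
      using chernoff_exponent[OF Dj bj] by blast
    have labs: "\<bar>l\<bar> \<le> 1 / b j" using l by simp
    define Y where "Y r \<omega> = llr p s istar j r \<omega> + D j" for r \<omega>
    define c where "c = exp (l\<^sup>2 * (\<nu> j)\<^sup>2 / 2)"
    have jJ': "j \<in> {1..T} - {istar}" using j by (simp add: J_def)
    have mG: "Y i \<in> borel_measurable (G r)" if "1 \<le> i" "i \<le> r" "r < k" for i r
    proof -
      have "llr p s istar j i \<in> borel_measurable (G i)" using Z_adapted[OF jJ'] that by auto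
      then have "llr p s istar j i \<in> borel_measurable (G r)"
        by (rule measurable_from_subalg[OF subalgG[OF that(2)]])
      then show ?thesis unfolding Y_def[abs_def] by simp
    qed
    have mN: "Y i \<in> borel_measurable Mc" if "1 \<le> i" "i \<le> k" for i
      unfolding Y_def[abs_def] bm_Mc using llr_M[OF j] that by simp
    have iY: "integrable Mc (\<lambda>\<omega>. exp (l * Y r \<omega>))" if "1 \<le> r" "r \<le> k" for r
      unfolding Y_def using Z_mgf_int[OF jJ' _ labs] that by simp
    have cY: "AE \<omega> in Mc. real_cond_exp Mc (G (r - 1)) (\<lambda>\<omega>. exp (l * Y r \<omega>)) \<omega> \<le> c" if "1 \<le> r" "r \<le> k" for r
      unfolding Y_def c_def using Z_mgf[OF jJ' _ labs] that by simp
    have mgf: "(\<integral>\<^sup>+\<omega>. ennreal (exp (l * (\<Sum>i\<in>{1..k}. Y i \<omega>))) \<partial>Mc) \<le> ennreal (c ^ k)"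
    proof (rule mgf_iter[of Mc k G Y l c k])
      show "\<And>r. r < k \<Longrightarrow> sigma_finite_subalgebra Mc (G r)" using sfs by simp
    qed (use Mc_prob mG mN iY cY in \<open>auto simp: c_def\<close>)
    have sumY: "(\<Sum>i\<in>{1..k}. Y i \<omega>) = SS j \<omega> + real k * D j" for \<omega>
      unfolding Y_def SS_def by (simp add: sum.distrib)
    have mSY: "(\<lambda>\<omega>. ennreal (exp (l * (\<Sum>i\<in>{1..k}. Y i \<omega>)))) \<in> borel_measurable Mc"
      using mN by (intro measurable_compose[OF _ measurable_ennreal] borel_measurable_exp borel_measurable_times borel_measurable_const borel_measurable_sum) auto
    have ind_le: "indicator (bad j) \<omega> \<le> ennreal (exp (l * (\<Sum>i\<in>{1..k}. Y i \<omega>))) * ennreal (exp (- (l * D j * real k / 2)))" for \<omega>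
    proof (cases "\<omega> \<in> bad j")
      case True
      then have "- (D j * real k / 2) < SS j \<omega>" by (simp add: bad_def)
      then have "0 < l * (SS j \<omega> + D j * real k / 2)" using l by (intro mult_pos_pos) auto
      then have "0 \<le> l * (\<Sum>i\<in>{1..k}. Y i \<omega>) + (- (l * D j * real k / 2))"
        unfolding sumY by (simp add: algebra_simps)
      then have "1 \<le> exp (l * (\<Sum>i\<in>{1..k}. Y i \<omega>)) * exp (- (l * D j * real k / 2))"
        by (simp add: exp_add[symmetric])
      then show ?thesis using True by (simp add: ennreal_mult[symmetric])
    qed simp
    have "emeasure Mc (bad j) = (\<integral>\<^sup>+\<omega>. indicator (bad j) \<omega> \<partial>Mc)"
      using bad_sets[OF jT] by simp
    also have "\<dots> \<le> (\<integral>\<^sup>+\<omega>. ennreal (exp (l * (\<Sum>i\<in>{1..k}. Y i \<omega>))) * ennreal (exp (- (l * D j * real k / 2))) \<partial>Mc)"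
      by (intro nn_integral_mono ind_le)
    also have "\<dots> = (\<integral>\<^sup>+\<omega>. ennreal (exp (l * (\<Sum>i\<in>{1..k}. Y i \<omega>))) \<partial>Mc) * ennreal (exp (- (l * D j * real k / 2)))"
      by (rule nn_integral_multc[OF mSY])
    also have "\<dots> \<le> ennreal (c ^ k) * ennreal (exp (- (l * D j * real k / 2)))"
      by (intro mult_right_mono mgf) simp
    also have "\<dots> = ennreal (exp (real k * (l\<^sup>2 * (\<nu> j)\<^sup>2 / 2 - l * D j / 2)))"
      unfolding c_def by (simp add: ennreal_mult[symmetric] exp_of_nat_mult[symmetric] exp_add[symmetric] algebra_simps)
    also have "\<dots> \<le> ennreal (exp (- C * real k))"
    proof -
      have "C \<le> (D j)\<^sup>2 / (8 * ((\<nu> j)\<^sup>2 + b j * D j / 2))"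
        unfolding C_def using jJ' by (intro Min_le) auto
      then have "l\<^sup>2 * (\<nu> j)\<^sup>2 / 2 - l * D j / 2 \<le> - C" using l(3) by linarith
      then have "real k * (l\<^sup>2 * (\<nu> j)\<^sup>2 / 2 - l * D j / 2) \<le> real k * (- C)"
        by (intro mult_left_mono) auto
      then show ?thesis by (intro ennreal_leI) (simp add: mult.commute)
    qed
    finally show ?thesis
      by (simp add: Mc.emeasure_eq_measure ennreal_le_iff)
  qed

  define post where "post \<omega> = bayes_post T \<alpha> p istar (data s k \<omega>)" for \<omega>
  define Qf where "Qf \<omega> = (\<Sum>i\<in>{1..T}. \<alpha> i * exp (SS i \<omega>))" for \<omega>
  have lik_pos: "lik p i d > 0" if "i \<in> {1..T}" for i d
    unfolding lik_def using p_pos[OF that] by (intro prod_pos) auto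
  have sum_pos: "(\<Sum>i\<in>{1..T}. \<alpha> i * lik p i d) > 0" for d
    using T \<alpha>_pos lik_pos by (intro sum_pos) auto
  have post_eq: "post \<omega> = \<alpha> istar / Qf \<omega>" for \<omega>
  proof -
    let ?L = "\<lambda>i. lik p i (data s k \<omega>)"
    have Lp: "?L istar > 0" using lik_pos istar by auto
    have "Qf \<omega> = (\<Sum>i\<in>{1..T}. \<alpha> i * (?L i / ?L istar))"
      unfolding Qf_def SS_def
    proof (intro sum.cong refl)
      fix i assume i: "i \<in> {1..T}"
      show "\<alpha> i * exp (\<Sum>r\<in>{1..k}. llr p s istar i r \<omega>) = \<alpha> i * (?L i / ?L istar)"
        using lik_ratio[of p i istar s k \<omega>] p_pos[OF i] p_pos[OF istar] by simp
    qed
    also have "\<dots> = (\<Sum>i\<in>{1..T}. \<alpha> i * ?L i) / ?L istar"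
      by (simp add: sum_divide_distrib)
    finally have "(\<Sum>i\<in>{1..T}. \<alpha> i * ?L i) = Qf \<omega> * ?L istar" using Lp by (simp add: field_simps)
    then show ?thesis unfolding post_def bayes_post_def using Lp by simp
  qed
  have Qf_ge: "Qf \<omega> \<ge> \<alpha> istar" for \<omega>
  proof -
    have "Qf \<omega> = \<alpha> istar * exp (SS istar \<omega>) + (\<Sum>i\<in>{1..T} - {istar}. \<alpha> i * exp (SS i \<omega>))"
      unfolding Qf_def using istar by (simp add: sum.remove)
    moreover have "(\<Sum>i\<in>{1..T} - {istar}. \<alpha> i * exp (SS i \<omega>)) \<ge> 0"
      using \<alpha>_pos by (intro sum_nonneg) (auto intro: less_imp_le)
    ultimately show ?thesis by (simp add: SS_star)
  qed
  have astar: "\<alpha> istar > 0" using \<alpha>_pos istar by auto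
  have post_bnd: "0 \<le> post \<omega> \<and> post \<omega> \<le> 1" for \<omega>
    using Qf_ge[of \<omega>] astar unfolding post_eq by (auto simp: divide_le_eq_1)
  have astar1: "\<alpha> istar \<le> 1"
  proof -
    have "\<alpha> istar \<le> (\<Sum>i\<in>{1..T}. \<alpha> i)" using istar \<alpha>_pos by (intro member_le_sum) (auto intro: less_imp_le)
    then show ?thesis using \<alpha>_sum by simp
  qed
  define \<eta>1 where "\<eta>1 = (1 - \<alpha> istar) / \<alpha> istar * exp (- Dmin * real k / 2)"
  have \<eta>1_nn: "\<eta>1 \<ge> 0" unfolding \<eta>1_def using astar astar1 by simp
  have post_lower: "post \<omega> \<ge> 1 - \<eta>1 - (\<Sum>j\<in>J. indicator (bad j) \<omega>)" if \<omega>: "\<omega> \<in> space M" for \<omega>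
  proof (cases "\<exists>j\<in>J. \<omega> \<in> bad j")
    case True
    then obtain j where "j \<in> J" "\<omega> \<in> bad j" by blast
    then have "1 \<le> (\<Sum>j\<in>J. indicator (bad j) \<omega> :: real)"
      using finJ member_le_sum[of j J "\<lambda>j. indicator (bad j) \<omega> :: real"] by auto
    then show ?thesis using post_bnd[of \<omega>] \<eta>1_nn by linarith
  next
    case False
    then have z: "(\<Sum>j\<in>J. indicator (bad j) \<omega> :: real) = 0" by (auto intro: sum.neutral)
    have "\<alpha> istar / (\<Sum>i\<in>{1..T}. \<alpha> i * exp (SS i \<omega>)) \<ge> 1 - (1 - \<alpha> istar) / \<alpha> istar * exp (- Dmin * real k / 2)"
    proof (rule post_lower[OF _ istar])
      show "exp (SS istar \<omega>) = 1" by (simp add: SS_star)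
      show "exp (SS j \<omega>) \<le> exp (- Dmin * real k / 2)" if "j \<in> {1..T} - {istar}" for j
      proof -
        have "\<omega> \<notin> bad j" using False that by (auto simp: J_def)
        then have "SS j \<omega> \<le> - (D j * real k / 2)" using \<omega> by (auto simp: bad_def)
        moreover have "Dmin \<le> D j" unfolding Dmin_def using that by (intro Min_le) auto
        then have "- (D j * real k / 2) \<le> - Dmin * real k / 2" by (simp add: mult_right_mono)
        ultimately show ?thesis by simp
      qed
    qed (use \<alpha>_pos \<alpha>_sum in auto)
    then show ?thesis using z unfolding post_eq Qf_def \<eta>1_def by simp
  qed
  have Qf_M: "Qf \<in> borel_measurable M"
    unfolding Qf_def[abs_def] using SS_M by (intro borel_measurable_sum borel_measurable_times borel_measurable_exp borel_measurable_const) auto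
  have post_M: "post \<in> borel_measurable M"
  proof -
    have "post = (\<lambda>\<omega>. \<alpha> istar / Qf \<omega>)" using post_eq by auto
    then show ?thesis using Qf_M by simp
  qed
  have int_post: "integrable Mc post"
    using post_bnd post_M bm_Mc by (intro Mc.integrable_const_bound[where B=1]) auto
  have int_ind: "integrable Mc (indicator (bad j) :: 'w \<Rightarrow> real)" if "j \<in> J" for j
    using bad_sets that by (intro integrable_real_indicator) (auto simp: J_def Mc.emeasure_finite less_top[symmetric])
  have Epost1: "(\<integral>\<omega>. post \<omega> \<partial>Mc) \<ge> 1 - \<eta>1 - (real T - 1) * exp (- C * real k)"
  proof -
    have "(\<integral>\<omega>. 1 - \<eta>1 - (\<Sum>j\<in>J. indicator (bad j) \<omega>) \<partial>Mc) \<le> (\<integral>\<omega>. post \<omega> \<partial>Mc)"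
      using post_lower int_ind int_post by (intro integral_mono) auto
    moreover have "(\<integral>\<omega>. 1 - \<eta>1 - (\<Sum>j\<in>J. indicator (bad j) \<omega>) \<partial>Mc) = 1 - \<eta>1 - (\<Sum>j\<in>J. measure Mc (bad j))"
    proof -
      have "(\<integral>\<omega>. 1 - \<eta>1 - (\<Sum>j\<in>J. indicator (bad j) \<omega>) \<partial>Mc) = (\<integral>\<omega>. 1 - \<eta>1 \<partial>Mc) - (\<integral>\<omega>. (\<Sum>j\<in>J. indicator (bad j) \<omega>) \<partial>Mc)"
        using int_ind by (intro Bochner_Integration.integral_diff) auto
      also have "(\<integral>\<omega>. (\<Sum>j\<in>J. indicator (bad j) \<omega>) \<partial>Mc) = (\<Sum>j\<in>J. (\<integral>\<omega>. indicator (bad j) \<omega> \<partial>Mc) :: real)"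
        using int_ind by (subst Bochner_Integration.integral_sum) auto
      also have "\<dots> = (\<Sum>j\<in>J. measure Mc (bad j))"
        using bad_sets by (intro sum.cong refl) (auto simp: J_def Int_absorb2 sets.sets_into_space)
      finally show ?thesis by (simp add: Mc_sp)
    qed
    moreover have "(\<Sum>j\<in>J. measure Mc (bad j)) \<le> (\<Sum>j\<in>J. exp (- C * real k))"
      using chern by (intro sum_mono) auto
    moreover have "(\<Sum>j\<in>J. exp (- C * real k)) = (real T - 1) * exp (- C * real k)"
      using T istar by (simp add: J_def card_Diff_singleton of_nat_diff)
    ultimately show ?thesis by linarith
  qed
  have Epost0: "(\<integral>\<omega>. post \<omega> \<partial>Mc) \<ge> 0" using post_bnd by (intro Bochner_Integration.integral_nonneg) auto
  have Epost: "(\<integral>\<omega>. post \<omega> \<partial>Mc) \<ge> pos_part (1 - eta (\<alpha> istar) T Dmin C k)"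
    using Epost0 Epost1 unfolding pos_part_def eta_def \<eta>1_def by linarith

  define qs where "qs \<omega> = q istar (data s k \<omega>)" for \<omega>
  have qs_M: "qs \<in> borel_measurable M" unfolding qs_def[abs_def] using fromG[OF _ q_meas[OF istar]] by simp
  have qs_bnd: "0 \<le> qs \<omega> \<and> qs \<omega> \<le> 1" if "\<omega> \<in> space M" for \<omega>
  proof -
    have "qs \<omega> \<le> (\<Sum>i\<in>{1..T}. q i (data s k \<omega>))" unfolding qs_def
      using q_nonneg that istar by (intro member_le_sum) auto
    then show ?thesis using q_sum[OF that] q_nonneg[OF istar that] by (simp add: qs_def)
  qed
  have int_qs: "integrable Mc qs"
    using qs_bnd qs_M bm_Mc by (intro Mc.integrable_const_bound[where B=1] AE_I2) auto
  have qs_ge: "qs \<omega> \<ge> post \<omega> - \<epsilon>ICL" if "\<omega> \<in> space M" for \<omega>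
  proof -
    have p1: "(\<Sum>i\<in>{1..T}. bayes_post T \<alpha> p i (data s k \<omega>)) = 1"
      unfolding bayes_post_def using sum_pos[of "data s k \<omega>"]
      by (simp add: sum_divide_distrib[symmetric])
    have "post \<omega> - qs \<omega> \<le> tv_dist T (\<lambda>i. q i (data s k \<omega>)) (\<lambda>i. bayes_post T \<alpha> p i (data s k \<omega>))"
      unfolding tv_dist_def post_def qs_def using q_sum[OF that] p1 istar
      by (intro tv_lower) auto
    then show ?thesis using ICL[OF that] by simp
  qed
  have Eqs: "(\<integral>\<omega>. qs \<omega> \<partial>Mc) \<ge> pos_part (1 - eta (\<alpha> istar) T Dmin C k) - \<epsilon>ICL"
  proof -
    have "(\<integral>\<omega>. post \<omega> - \<epsilon>ICL \<partial>Mc) \<le> (\<integral>\<omega>. qs \<omega> \<partial>Mc)"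
      using int_post int_qs qs_ge by (intro integral_mono) auto
    moreover have "(\<integral>\<omega>. post \<omega> - \<epsilon>ICL \<partial>Mc) = (\<integral>\<omega>. post \<omega> \<partial>Mc) - \<epsilon>ICL"
      using int_post by (simp add: Bochner_Integration.integral_diff Mc_sp)
    ultimately show ?thesis using Epost by linarith
  qed

  define A2 where "A2 = {\<omega> \<in> space M. Ihat \<omega> = istar \<and> iota \<omega> \<in> Istar}"
  have A2_eq: "A2 = (Ihat -` {istar} \<inter> space M) \<inter> {\<omega> \<in> space M. iota \<omega> \<in> Istar}"
    unfolding A2_def by auto
  have A2_sets: "A2 \<in> sets M"
    unfolding A2_eq using measurable_sets[OF Ihat_meas, of "{istar}"] iota_meas by auto
  have cp: "cond_prob M (\<lambda>\<omega>. iota \<omega> \<in> Istar) (\<lambda>\<omega>. w \<omega> \<le> cg * (eps0 / 2 ^ (m - 1)))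
      = measure Mc {\<omega> \<in> space M. iota \<omega> \<in> Istar}"
  proof -
    have "Measurable.pred M (\<lambda>\<omega>. iota \<omega> \<in> Istar)" using iota_meas by (simp add: pred_def)
    moreover have "Measurable.pred M (\<lambda>\<omega>. w \<omega> \<le> cg * (eps0 / 2 ^ (m - 1)))" using w_meas by measurable
    ultimately show ?thesis
      using M.measure_uniform_measure_eq_cond_prob[symmetric] unfolding Mc_def by simp
  qed
  have "measure Mc A2 \<le> measure Mc {\<omega> \<in> space M. iota \<omega> \<in> Istar}"
    using iota_meas by (intro Mc.finite_measure_mono) (auto simp: A2_def)
  moreover have "measure Mc A2 = (\<integral>\<omega>. indicator A2 \<omega> \<partial>Mc)"
    using A2_sets by (simp add: Int_absorb2 sets.sets_into_space)
  moreover have int_A2: "integrable Mc (indicator A2 :: 'w \<Rightarrow> real)"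
    using A2_sets by (intro integrable_real_indicator) (auto simp: Mc.emeasure_finite less_top[symmetric])
  moreover have "(\<integral>\<omega>. indicator A2 \<omega> \<partial>Mc) = (\<integral>\<omega>. real_cond_exp Mc (G k) (indicator A2) \<omega> \<partial>Mc)"
    using sigma_finite_subalgebra.real_cond_exp_int(2)[OF sfs[OF order_refl] int_A2] by simp
  moreover have "(\<integral>\<omega>. (1 - \<beta>) * qs \<omega> \<partial>Mc) \<le> (\<integral>\<omega>. real_cond_exp Mc (G k) (indicator A2) \<omega> \<partial>Mc)"
    using proposal int_qs sigma_finite_subalgebra.real_cond_exp_int(1)[OF sfs[OF order_refl] int_A2]
    unfolding A2_def qs_def[abs_def]
    by (intro integral_mono_AE) auto
  moreover have "(\<integral>\<omega>. (1 - \<beta>) * qs \<omega> \<partial>Mc) = (1 - \<beta>) * (\<integral>\<omega>. qs \<omega> \<partial>Mc)" by simp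
  moreover have "(1 - \<beta>) * (pos_part (1 - eta (\<alpha> istar) T Dmin C k) - \<epsilon>ICL) \<le> (1 - \<beta>) * (\<integral>\<omega>. qs \<omega> \<partial>Mc)"
    using Eqs \<beta> by (intro mult_left_mono) auto
  ultimately show ?thesis unfolding cp delta_plus_def by (simp add: right_diff_distrib)
qed

end
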